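(* There exists a subset $\mathcal{A}\subseteq\mathbb{Z}$ which is not recursively enumerable but is determinable in finite quotients of $\mathbb{Z}$.
   Context: A subset $A$ of a finitely generated group $G$ is determinable in finite quotients of $G$ if there is an algorithm which, given a surjective homomorphism $\phi$ from $G$ onto a finite group $F$, decides membership in $\phi(A)\subseteq F$. For $G=\mathbb{Z}$ this amounts to an algorithm which, given $n\geq 1$, computes $\mathcal{A}\bmod n=\{r\in\{0,\dots,n-1\}:\exists a\in\mathcal{A},\ a\equiv r\bmod n\}$. *)

theory Defs
  imports Main "HOL-Library.Nat_Bijection"
begin

text \<open>Partial recursive functions (Kleene), as the model of "algorithm".\<close>

datatype recf =
    Zero
  | Succ
  | Proj nat
  | Comp recf "recf list"
  | Prim recf recf
  | Mini recf

inductive eval :: "recf \<Rightarrow> nat list \<Rightarrow> nat \<Rightarrow> bool" where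
  eval_Zero: "eval Zero xs 0"
| eval_Succ: "eval Succ (x # xs) (Suc x)"
| eval_Proj: "i < length xs \<Longrightarrow> eval (Proj i) xs (xs ! i)"
| eval_Comp: "list_all2 (\<lambda>g y. eval g xs y) gs ys \<Longrightarrow> eval f ys z \<Longrightarrow> eval (Comp f gs) xs z"
| eval_Prim0: "eval f xs y \<Longrightarrow> eval (Prim f g) (0 # xs) y"
| eval_PrimS: "eval (Prim f g) (n # xs) y \<Longrightarrow> eval g (n # y # xs) z \<Longrightarrow> eval (Prim f g) (Suc n # xs) z"
| eval_Mini: "eval f (n # xs) 0 \<Longrightarrow> (\<forall>m<n. \<exists>y. eval f (m # xs) (Suc y)) \<Longrightarrow> eval (Mini f) xs n"

definition re_nat :: "nat set \<Rightarrow> bool" where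
  "re_nat S \<longleftrightarrow> (\<exists>f. \<forall>x. x \<in> S \<longleftrightarrow> (\<exists>y. eval f [x] y))"

definition re_int :: "int set \<Rightarrow> bool" where
  "re_int A \<longleftrightarrow> re_nat (int_encode ` A)"

definition mod_set :: "int set \<Rightarrow> nat \<Rightarrow> nat set" where
  "mod_set A n = {r. r < n \<and> (\<exists>a\<in>A. a mod int n = int r)}"

definition determinable_Z :: "int set \<Rightarrow> bool" where
  "determinable_Z A \<longleftrightarrow> (\<exists>d. \<forall>n r. 1 \<le> n \<longrightarrow> r < n \<longrightarrow>
       eval d [n, r] (if r \<in> mod_set A n then 1 else 0))"

end

theory Submission
  imports Defs "HOL-Library.Countable"
begin

instance recf :: countable by countable_datatype

definition AT :: "nat set \<Rightarrow> int set" where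
  "AT T = {x. x < 0} \<union> int ` T"

lemma det_AT: "determinable_Z (AT T)"
proof -
  have ms: "mod_set (AT T) n = {r. r < n}" if "1 \<le> n" for n
  proof -
    have "\<exists>a\<in>AT T. a mod int n = int r" if "r < n" for r
    proof
      show "int r - int n \<in> AT T" using that by (auto simp: AT_def)
      show "(int r - int n) mod int n = int r" using that
        by (simp add: mod_diff_right_eq[symmetric])
    qed
    thus ?thesis by (auto simp: mod_set_def)
  qed
  have ev: "eval (Comp Succ [Zero]) xs 1" for xs
  proof (rule eval_Comp)
    show "list_all2 (\<lambda>g y. eval g xs y) [Zero] [0]" by (simp add: eval_Zero)
    show "eval Succ [0] 1" using eval_Succ[of 0 "[]"] by simp
  qed
  show ?thesis unfolding determinable_Z_def
    by (rule exI[of _ "Comp Succ [Zero]"]) (auto simp: ms ev[simplified])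
qed

lemma not_re: "\<exists>T. \<not> re_int (AT T)"
proof (rule ccontr)
  assume H: "\<not> (\<exists>T. \<not> re_int (AT T))"
  define F where "F n = {x. \<exists>y. eval (from_nat n :: recf) [x] y}" for n
  define T where "T = {n. int_encode (int n) \<notin> F n}"
  have "re_int (AT T)" using H by blast
  then obtain f where f: "\<And>x. x \<in> int_encode ` AT T \<longleftrightarrow> (\<exists>y. eval f [x] y)"
    by (auto simp: re_int_def re_nat_def)
  define m where "m = to_nat f"
  have fm: "from_nat m = f" by (simp add: m_def)
  have "int_encode (int m) \<in> int_encode ` AT T \<longleftrightarrow> int m \<in> AT T"
    using inj_int_encode by (auto dest: injD)
  also have "\<dots> \<longleftrightarrow> m \<in> T" by (auto simp: AT_def)
  also have "\<dots> \<longleftrightarrow> int_encode (int m) \<notin> F m" by (simp add: T_def)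
  also have "\<dots> \<longleftrightarrow> int_encode (int m) \<notin> int_encode ` AT T"
    using f fm by (simp add: F_def)
  finally show False by blast
qed

theorem mainTheorem5:
  shows "\<exists>A :: int set. \<not> re_int A \<and> determinable_Z A"
  using not_re det_AT by blast

end
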